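(* Let $\ell\in\mathbb{Z}_{\ge 2}$ and let $b_{n,m}=b_{n,m}(\ell)$ be as in the context. Define rational functions $R_{\ell-j}(x)$ for $2\le j\le \ell$ by $R_{\ell-2}(x)=1$, $R_{\ell-3}(x)=x^{-1}$, and $R_{\ell-j}(x)=x^{-1}R_{\ell-j+1}(x)-R_{\ell-j+2}(x)$ for $j>3$. Then for every $2\le j\le \ell$, as formal power series in $x$, $$\sum_{\substack{m\ge 0,\ m\equiv \ell-j \bmod \ell\\ n\ge \ell-j}} b_{n,m}x^n \;=\; R_{\ell-j}(x)\sum_{\substack{m\ge 0,\ m\equiv \ell-2\bmod \ell\\ n\ge \ell-2}} b_{n,m}x^n .$$
   Context: For $n,m\in\mathbb{Z}_{\ge 0}$, $a_{n,m}$ is the number of sequences of integers $(x_0,\dots,x_n)$ with $x_0=0$, $x_n=m$, all $x_i\ge 0$ and $|x_i-x_{i-1}|=1$ (unit step paths on $\mathbb{Z}_{\ge 0}$ from $0$ to $m$ of length $n$). For fixed $\ell\in\mathbb{Z}_{\ge2}$, the numbers $b_{n,m}=b_{n,m}(\ell)$ ($n,m\ge 0$) are defined by: $b_{n,m}=a_{n,m}$ if $m\equiv -1\pmod \ell$; $b_{n,m}=b_{n-1,m-1}+b_{n-1,m+1}$ if $m\equiv m_0\pmod\ell$ with $0\le m_0<\ell-2$; $b_{n,m}=b_{n-1,m-1}$ if $m\equiv -2\pmod \ell$. Here the recursion is used for $n\ge 1$, with initial values $b_{0,0}=1$, $b_{0,m}=0$ for $m>0$, and the convention $b_{n,-1}=0$.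 (In particular $b_{n,m}=0$ for $m>n$.) *)

theory Defs
  imports "HOL-Computational_Algebra.Formal_Laurent_Series"
begin

definition a :: "nat \<Rightarrow> nat \<Rightarrow> nat" where
  "a n m = card {xs :: nat list. length xs = Suc n \<and> xs ! 0 = 0 \<and> xs ! n = m \<and>
                 (\<forall>i<n. xs ! Suc i = xs ! i + 1 \<or> xs ! i = xs ! Suc i + 1)}"

text \<open>b l n m = b_{n,m}(l). The convention b_{n,-1} = 0 is built in (case m = 0).\<close>
fun b :: "nat \<Rightarrow> nat \<Rightarrow> nat \<Rightarrow> nat" where
  "b l 0 m = (if m = 0 then 1 else 0)"
| "b l (Suc n) m =
     (if m mod l = l - 1 then a (Suc n) m
      else if m mod l = l - 2 then (if m = 0 then 0 else b l n (m - 1))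
      else (if m = 0 then 0 else b l n (m - 1)) + b l n (m + 1))"

text \<open>Rseq k = R_{l-(k+2)}(x):  R_{l-2} = 1, R_{l-3} = x^{-1},
  R_{l-j} = x^{-1} R_{l-j+1} - R_{l-j+2}.\<close>
fun Rseq :: "nat \<Rightarrow> int fls" where
  "Rseq 0 = 1"
| "Rseq (Suc 0) = fls_X_inv"
| "Rseq (Suc (Suc k)) = fls_X_inv * Rseq (Suc k) - Rseq k"

text \<open>Generating series  sum_{m >= 0, m = r mod l, n >= r} b_{n,m} x^n.
  Since b_{n,m} = 0 for m > n, the coefficient of x^n is a finite sum over m <= n.\<close>
definition G :: "nat \<Rightarrow> nat \<Rightarrow> int fps" where
  "G l r = Abs_fps (\<lambda>n. if r \<le> n then int (\<Sum>m | m \<le> n \<and> m mod l = r mod l. b l n m) else 0)"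

end

theory Submission
  imports Defs
begin

lemma a_zero:
  assumes "n < m" shows "a n m = 0"
proof -
  have *: False if xs: "length xs = Suc n" "xs ! 0 = 0" "xs ! n = m"
      "\<forall>i<n. xs ! Suc i = xs ! i + 1 \<or> xs ! i = xs ! Suc i + 1" for xs :: "nat list"
  proof -
    have "\<And>i. i \<le> n \<Longrightarrow> xs ! i \<le> i"
    proof -
      fix i show "i \<le> n \<Longrightarrow> xs ! i \<le> i"
      proof (induction i)
        case 0 then show ?case using xs by simp
      next
        case (Suc i) then show ?case using xs(4)[rule_format, of i] by auto
      qed
    qed
    then have "xs ! n \<le> n" by simp
    then show False using xs assms by simp
  qed
  have "{xs :: nat list. length xs = Suc n \<and> xs ! 0 = 0 \<and> xs ! n = m \<and>
                 (\<forall>i<n. xs ! Suc i = xs ! i + 1 \<or> xs ! i = xs ! Suc i + 1)} = {}"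
    using * by blast
  then show ?thesis unfolding a_def by (metis card.empty)
qed

lemma b_zero:
  assumes "2 \<le> l" shows "n < m \<Longrightarrow> b l n m = 0"
proof (induction n arbitrary: m)
  case 0 then show ?case by simp
next
  case (Suc n) then show ?case using a_zero by auto
qed

definition F :: "nat \<Rightarrow> nat \<Rightarrow> nat \<Rightarrow> nat \<Rightarrow> int" where
  "F l n r N = (\<Sum>m<N. if m mod l = r then int (b l n m) else 0)"

lemma F_bound:
  assumes "2 \<le> l" "n < N" shows "F l n r N = F l n r (Suc n)"
proof -
  obtain d where d: "N = Suc n + d" using less_imp_Suc_add[OF assms(2)] by auto
  have "F l n r (Suc n + d) = F l n r (Suc n)" for d
  proof (induction d)
    case 0 then show ?case by simp
  next
    case (Suc d)
    have "F l n r (Suc n + Suc d) = F l n r (Suc n + d) + (if (Suc n + d) mod l = r then int (b l n (Suc n + d)) else 0)"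
      unfolding F_def by simp
    also have "b l n (Suc n + d) = 0" using b_zero[OF assms(1)] by simp
    finally show ?case using Suc by simp
  qed
  then show ?thesis using d by simp
qed

lemma G_coef:
  assumes "r < l" shows "G l r $ n = F l n r (Suc n)"
proof (cases "r \<le> n")
  case True
  have e: "{m. m \<le> n \<and> m mod l = r mod l} = {x\<in>{..<Suc n}. x mod l = r}"
    using assms by auto
  have "G l r $ n = int (\<Sum>m\<in>{m. m \<le> n \<and> m mod l = r mod l}. b l n m)"
    using True unfolding G_def by simp
  also have "\<dots> = int (\<Sum>m<Suc n. if m mod l = r then b l n m else 0)"
    unfolding e by (subst sum.inter_filter) auto
  also have "\<dots> = F l n r (Suc n)" unfolding F_def of_nat_sum
    by (intro sum.cong refl) simp
  finally show ?thesis .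
next
  case False
  have "m mod l \<noteq> r" if "m < Suc n" for m
    using mod_less_eq_dividend[of m l] False that by linarith
  then have "F l n r (Suc n) = 0" unfolding F_def by simp
  moreover have "G l r $ n = 0" using False unfolding G_def by simp
  ultimately show ?thesis by simp
qed

lemma mod_Suc_iff:
  assumes "0 < c" "c < l" shows "(Suc m mod l = c) = (m mod l = c - 1)"
  using mod_Suc[of m l] mod_less_divisor[of l m] assms by auto

lemma G_top:
  assumes "3 \<le> l" shows "G l (l-2) = fps_X * G l (l-3)"
proof (rule fps_ext)
  fix n
  show "G l (l - 2) $ n = (fps_X * G l (l - 3)) $ n"
  proof (cases n)
    case 0 then show ?thesis using assms by (simp add: G_coef F_def)
  next
    case (Suc k)
    have "F l (Suc k) (l-2) (Suc (Suc k)) = F l k (l-3) (Suc k)"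
    proof -
      have "F l (Suc k) (l-2) (Suc (Suc k)) =
            (\<Sum>m<Suc k. if Suc m mod l = l-2 then int (b l k m) else 0)"
        unfolding F_def using assms by (subst sum.lessThan_Suc_shift) (auto intro!: sum.cong)
      also have "\<dots> = F l k (l-3) (Suc k)" unfolding F_def
        using assms by (intro sum.cong refl) (simp add: mod_Suc_iff)
      finally show ?thesis .
    qed
    then show ?thesis using assms Suc by (simp add: G_coef)
  qed
qed

lemma G_mid:
  assumes "2 \<le> l" "1 \<le> s" "s + 3 \<le> l"
  shows "G l s = fps_X * (G l (s-1) + G l (s+1))"
proof (rule fps_ext)
  fix n
  show "G l s $ n = (fps_X * (G l (s-1) + G l (s+1))) $ n"
  proof (cases n)
    case 0 then show ?thesis using assms by (simp add: G_coef F_def)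
  next
    case (Suc k)
    have "F l (Suc k) s (Suc (Suc k)) =
          (\<Sum>m<Suc (Suc k). if m mod l = s then int (b l k (m-1)) else 0) +
          (\<Sum>m<Suc (Suc k). if m mod l = s then int (b l k (m+1)) else 0)"
      unfolding F_def sum.distrib[symmetric] using assms
      by (intro sum.cong refl) auto
    also have "(\<Sum>m<Suc (Suc k). if m mod l = s then int (b l k (m-1)) else 0) = F l k (s-1) (Suc k)"
    proof -
      have "(\<Sum>m<Suc (Suc k). if m mod l = s then int (b l k (m-1)) else 0) =
            (\<Sum>m<Suc k. if Suc m mod l = s then int (b l k m) else 0)"
        using assms by (subst sum.lessThan_Suc_shift, simp del: sum.lessThan_Suc, intro sum.cong refl, simp)
      also have "\<dots> = F l k (s-1) (Suc k)" unfolding F_def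
        using assms by (intro sum.cong refl) (auto simp add: mod_Suc_iff)
      finally show ?thesis .
    qed
    also have "(\<Sum>m<Suc (Suc k). if m mod l = s then int (b l k (m+1)) else 0) = F l k (s+1) (Suc k)"
    proof -
      have "F l k (s+1) (Suc (Suc (Suc k))) =
            (\<Sum>m<Suc (Suc k). if Suc m mod l = s+1 then int (b l k (Suc m)) else 0)"
        unfolding F_def using assms by (subst sum.lessThan_Suc_shift) auto
      also have "\<dots> = (\<Sum>m<Suc (Suc k). if m mod l = s then int (b l k (m+1)) else 0)"
        using assms by (intro sum.cong refl) (auto simp add: mod_Suc_iff)
      finally show ?thesis using F_bound[OF assms(1), of k "Suc (Suc (Suc k))"] by simp
    qed
    finally show ?thesis using assms Suc by (simp add: G_coef)
  qed
qed

lemma XinvX: "fls_X_inv * (fls_X :: int fls) = 1"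
  by (simp add: fls_X_inv_times_conv_shift)

lemma main:
  assumes "2 \<le> l" shows "k + 2 \<le> l \<Longrightarrow> fps_to_fls (G l (l - 2 - k)) = Rseq k * fps_to_fls (G l (l - 2))"
proof (induction k rule: Rseq.induct)
  case 1 then show ?case by simp
next
  case 2
  have "fps_to_fls (G l (l-2)) = fls_X * fps_to_fls (G l (l-3))"
    using G_top[of l] 2 by (simp add: fls_times_fps_to_fls)
  then have "fls_X_inv * fps_to_fls (G l (l-2)) = fps_to_fls (G l (l-3))"
    by (simp add: mult.assoc[symmetric] XinvX)
  then show ?case by (simp add: numeral_eq_Suc)
next
  case (3 k)
  define s where "s = l - 3 - k"
  have s: "1 \<le> s" "s + 3 \<le> l" "l - 2 - Suc (Suc k) = s - 1" "l - 2 - Suc k = s"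
    "l - 2 - k = s + 1" using 3 unfolding s_def by auto
  have "fps_to_fls (G l s) = fls_X * (fps_to_fls (G l (s-1)) + fps_to_fls (G l (s+1)))"
    using G_mid[OF assms s(1,2)] by (simp add: fls_times_fps_to_fls)
  then have "fls_X_inv * fps_to_fls (G l s) = fps_to_fls (G l (s-1)) + fps_to_fls (G l (s+1))"
    by (simp add: mult.assoc[symmetric] XinvX)
  then have "fps_to_fls (G l (s-1)) = fls_X_inv * fps_to_fls (G l s) - fps_to_fls (G l (s+1))"
    by (simp add: algebra_simps)
  then show ?case using 3 s by (simp add: algebra_simps)
qed

theorem lemma2p8:
  fixes l j :: nat
  assumes "2 \<le> l" and "2 \<le> j" and "j \<le> l"
  shows "fps_to_fls (G l (l - j)) = Rseq (j - 2) * fps_to_fls (G l (l - 2))"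
proof -
  have e: "l - j = l - 2 - (j-2)" using assms by simp
  show ?thesis unfolding e by (rule main[OF assms(1)]) (use assms in simp)
qed

end
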